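(* Let $S$ be a closed connected oriented surface of genus $n\ge2$ and let $\chi\in H^1(S,\mathbb C)$ satisfy $\chi(H_1(S,\mathbb Z))=\mathbb Z+i\mathbb Z$ and $\omega(\chi)>0$. Then there is a symplectic basis $x_1,y_1,\dots,x_n,y_n$ of $H_1(S,\mathbb Z)$ such that $\mathrm{Im}(\overline{\chi(x_1)}\chi(y_1))>0$ and, for every $j=2,\dots,n$, $\chi(y_j)=0$ and $\chi(x_j)$ is a real number $\ge 0$.
   Context: A symplectic basis of $H_1(S,\mathbb Z)$ is a basis with intersection numbers $x_i\cdot y_j=\delta_{ij}$, $x_i\cdot x_j=y_i\cdot y_j=0$. $\omega(\chi):=\sum_{j=1}^n\mathrm{Im}(\overline{\chi(x_j)}\chi(y_j))$ for any symplectic basis (independent of the choice). *)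

theory Defs
  imports Complex_Main
begin

text \<open>Model of H_1(S,Z) for a closed connected oriented surface S of genus n:
  the lattice Z^(2n), realised as integer vectors nat => int supported on {0..<2n},
  with the standard intersection (symplectic) form; coordinates i and n+i form
  the standard symplectic pair (a_i, b_i), i < n.\<close>

definition H1 :: "nat \<Rightarrow> (nat \<Rightarrow> int) set" where
  "H1 n = {v. \<forall>k\<ge>2*n. v k = 0}"

definition inter :: "nat \<Rightarrow> (nat \<Rightarrow> int) \<Rightarrow> (nat \<Rightarrow> int) \<Rightarrow> int" where
  "inter n v w = (\<Sum>i<n. v i * w (n+i) - v (n+i) * w i)"

text \<open>A class chi in H^1(S,C) = Hom(H_1(S,Z),C), given by its values c k on the
  standard basis vectors.\<close>

definition chi :: "(nat \<Rightarrow> complex) \<Rightarrow> nat \<Rightarrow> (nat \<Rightarrow> int) \<Rightarrow> complex" where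
  "chi c n v = (\<Sum>k<2*n. of_int (v k) * c k)"

definition comb :: "nat \<Rightarrow> (nat \<Rightarrow> nat \<Rightarrow> int) \<Rightarrow> (nat \<Rightarrow> nat \<Rightarrow> int)
                     \<Rightarrow> (nat \<Rightarrow> int) \<Rightarrow> (nat \<Rightarrow> int) \<Rightarrow> (nat \<Rightarrow> int)" where
  "comb n x y a b = (\<lambda>k. \<Sum>j\<in>{1..n}. a j * x j k + b j * y j k)"

definition symplectic_basis :: "nat \<Rightarrow> (nat \<Rightarrow> nat \<Rightarrow> int) \<Rightarrow> (nat \<Rightarrow> nat \<Rightarrow> int) \<Rightarrow> bool" where
  "symplectic_basis n x y \<longleftrightarrow>
     (\<forall>j\<in>{1..n}. x j \<in> H1 n \<and> y j \<in> H1 n) \<and>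
     (\<forall>v\<in>H1 n. \<exists>a b. v = comb n x y a b) \<and>
     (\<forall>a b. comb n x y a b = (\<lambda>_. 0) \<longrightarrow> (\<forall>j\<in>{1..n}. a j = 0 \<and> b j = 0)) \<and>
     (\<forall>i\<in>{1..n}. \<forall>j\<in>{1..n}.
        inter n (x i) (y j) = (if i = j then 1 else 0) \<and>
        inter n (x i) (x j) = 0 \<and> inter n (y i) (y j) = 0)"

text \<open>omega(chi), computed in the standard symplectic basis (a_i, b_i) = (e_i, e_(n+i));
  it is independent of the symplectic basis chosen.\<close>

definition omega :: "(nat \<Rightarrow> complex) \<Rightarrow> nat \<Rightarrow> real" where
  "omega c n = (\<Sum>i<n. Im (cnj (c i) * c (n+i)))"

definition gauss_ints :: "complex set" where
  "gauss_ints = {of_int a + \<i> * of_int b | a b. True}"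

end

theory Submission
  imports Defs
begin


definition lin :: "((nat \<Rightarrow> int) \<Rightarrow> int) \<Rightarrow> bool" where
  "lin L \<longleftrightarrow> (\<forall>v w k. L (\<lambda>t. v t + k * w t) = L v + k * L w)"

definition addv :: "(nat \<Rightarrow> int) \<Rightarrow> int \<Rightarrow> (nat \<Rightarrow> int) \<Rightarrow> (nat \<Rightarrow> int)" where
  "addv v k w = (\<lambda>t. v t + k * w t)"

lemma lin_addv: "lin L \<Longrightarrow> L (addv v k w) = L v + k * L w"
  by (simp add: lin_def addv_def)

lemma inter_addv1: "inter n (addv v k w) z = inter n v z + k * inter n w z"
  by (simp add: inter_def addv_def sum_distrib_left algebra_simps sum.distrib sum_subtractf)

lemma inter_addv2: "inter n z (addv v k w) = inter n z v + k * inter n z w"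
  by (simp add: inter_def addv_def sum_distrib_left algebra_simps sum.distrib sum_subtractf)

lemma inter_antisym: "inter n v w = - inter n w v"
  by (simp add: inter_def sum_negf[symmetric] algebra_simps)

lemma inter_self[simp]: "inter n v v = 0"
  using inter_antisym[of n v v] by simp

lemma H1_addv: "v \<in> H1 n \<Longrightarrow> w \<in> H1 n \<Longrightarrow> addv v k w \<in> H1 n"
  by (simp add: H1_def addv_def)

lemma inter_comb: "inter n (comb n x y a b) z = (\<Sum>j\<in>{1..n}. a j * inter n (x j) z + b j * inter n (y j) z)"
proof -
  have "inter n (comb n x y a b) z =
     (\<Sum>i<n. \<Sum>j\<in>{1..n}. a j * (x j i * z (n+i) - x j (n+i) * z i) + b j * (y j i * z (n+i) - y j (n+i) * z i))"
    unfolding inter_def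
  proof (rule sum.cong)
    fix i assume "i \<in> {..<n}"
    have "comb n x y a b i * z (n + i) - comb n x y a b (n + i) * z i =
       (\<Sum>j\<in>{1..n}. (a j * x j i + b j * y j i) * z (n+i)) - (\<Sum>j\<in>{1..n}. (a j * x j (n+i) + b j * y j (n+i)) * z i)"
      by (simp add: comb_def sum_distrib_right)
    also have "\<dots> = (\<Sum>j\<in>{1..n}. (a j * x j i + b j * y j i) * z (n+i) - (a j * x j (n+i) + b j * y j (n+i)) * z i)"
      by (simp add: sum_subtractf)
    also have "\<dots> = (\<Sum>j\<in>{1..n}. a j * (x j i * z (n+i) - x j (n+i) * z i) + b j * (y j i * z (n+i) - y j (n+i) * z i))"
      by (rule sum.cong) (simp_all add: algebra_simps)
    finally show "comb n x y a b i * z (n + i) - comb n x y a b (n + i) * z i = \<dots>" .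
  qed simp
  also have "\<dots> = (\<Sum>j\<in>{1..n}. \<Sum>i<n. a j * (x j i * z (n+i) - x j (n+i) * z i) + b j * (y j i * z (n+i) - y j (n+i) * z i))"
    by (rule sum.swap)
  also have "\<dots> = (\<Sum>j\<in>{1..n}. a j * inter n (x j) z + b j * inter n (y j) z)"
    unfolding inter_def by (simp add: sum.distrib sum_distrib_left)
  finally show ?thesis .
qed

definition inspan where "inspan n x y v \<longleftrightarrow> (\<exists>a b. v = comb n x y a b)"

lemma comb_comp:
  assumes "\<forall>j\<in>{1..n}. x j = comb n x' y' (A j) (B j) \<and> y j = comb n x' y' (C j) (D j)"
  shows "comb n x y a b = comb n x' y' (\<lambda>m. \<Sum>j\<in>{1..n}. a j * A j m + b j * C j m)
                                        (\<lambda>m. \<Sum>j\<in>{1..n}. a j * B j m + b j * D j m)"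
proof
  fix t
  have "comb n x y a b t = (\<Sum>j\<in>{1..n}. a j * comb n x' y' (A j) (B j) t + b j * comb n x' y' (C j) (D j) t)"
    unfolding comb_def using assms by (intro sum.cong) (auto simp: comb_def)
  also have "\<dots> = (\<Sum>j\<in>{1..n}. \<Sum>m\<in>{1..n}. (a j * A j m + b j * C j m) * x' m t + (a j * B j m + b j * D j m) * y' m t)"
    unfolding comb_def by (intro sum.cong) (auto simp: sum_distrib_left sum.distrib[symmetric] algebra_simps)
  also have "\<dots> = (\<Sum>m\<in>{1..n}. \<Sum>j\<in>{1..n}. (a j * A j m + b j * C j m) * x' m t + (a j * B j m + b j * D j m) * y' m t)"
    by (rule sum.swap)
  also have "\<dots> = comb n x' y' (\<lambda>m. \<Sum>j\<in>{1..n}. a j * A j m + b j * C j m)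
                                        (\<lambda>m. \<Sum>j\<in>{1..n}. a j * B j m + b j * D j m) t"
    unfolding comb_def by (simp add: sum.distrib sum_distrib_right distrib_right)
  finally show "comb n x y a b t = \<dots>" .
qed

lemma inspan_basis:
  assumes "j \<in> {1..n}"
  shows "inspan n x y (x j)" "inspan n x y (y j)"
proof -
  have e: "{m. m = j \<and> Suc 0 \<le> m \<and> m \<le> n} = {j}" using assms by auto
  have "x j = comb n x y (\<lambda>m. of_bool (m = j)) (\<lambda>m. 0)"
    unfolding comb_def using assms by (auto simp: Int_def e)
  then show "inspan n x y (x j)" unfolding inspan_def by blast
  have "y j = comb n x y (\<lambda>m. 0) (\<lambda>m. of_bool (m = j))"
    unfolding comb_def using assms by (auto simp: Int_def e)
  then show "inspan n x y (y j)" unfolding inspan_def by blast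
qed

lemma inspan_addv:
  assumes "inspan n x y v" "inspan n x y w"
  shows "inspan n x y (addv v k w)"
proof -
  obtain a b a' b' where "v = comb n x y a b" "w = comb n x y a' b'"
    using assms unfolding inspan_def by blast
  then have "addv v k w = comb n x y (\<lambda>m. a m + k * a' m) (\<lambda>m. b m + k * b' m)"
    unfolding addv_def comb_def by (auto simp: sum.distrib sum_distrib_left algebra_simps)
  then show ?thesis unfolding inspan_def by blast
qed

lemma Collect_eq_conj[simp]: "{x. x = j \<and> P x} = (if P j then {j} else {})"
  by auto

definition rels where
  "rels n x y \<longleftrightarrow> (\<forall>i\<in>{1..n}. \<forall>j\<in>{1..n}.
        inter n (x i) (y j) = (if i = j then 1 else 0) \<and>
        inter n (x i) (x j) = 0 \<and> inter n (y i) (y j) = 0)"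

lemma inter_zero1[simp]: "inter n (\<lambda>_. 0) z = 0"
  by (simp add: inter_def)

lemma indep_from_rels:
  assumes r: "rels n x y" and c: "comb n x y a b = (\<lambda>_. 0)" and j: "j \<in> {1..n}"
  shows "a j = 0 \<and> b j = 0"
proof
  have "0 = inter n (comb n x y a b) (y j)" using c by simp
  also have "\<dots> = (\<Sum>i\<in>{1..n}. a i * of_bool (i = j))"
    unfolding inter_comb using r j unfolding rels_def by (intro sum.cong) auto
  also have "\<dots> = a j" using j by (simp add: Int_def)
  finally show "a j = 0" by simp
  have "0 = inter n (comb n x y a b) (x j)" using c by simp
  also have "\<dots> = (\<Sum>i\<in>{1..n}. - (b i * of_bool (i = j)))"
    unfolding inter_comb using r j unfolding rels_def
    by (intro sum.cong) (auto simp: inter_antisym[of n "y _" "x j"])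
  also have "\<dots> = - b j" using j by (simp add: Int_def sum_negf)
  finally show "b j = 0" by simp
qed

lemma basis_change:
  assumes sb: "symplectic_basis n x y"
    and h: "\<forall>j\<in>{1..n}. x' j \<in> H1 n \<and> y' j \<in> H1 n"
    and sp: "\<forall>j\<in>{1..n}. inspan n x' y' (x j) \<and> inspan n x' y' (y j)"
    and r: "rels n x' y'"
  shows "symplectic_basis n x' y'"
proof -
  have "\<forall>j\<in>{1..n}. \<exists>p. x j = comb n x' y' (fst p) (snd p)" using sp unfolding inspan_def by auto
  then obtain P where P: "\<forall>j\<in>{1..n}. x j = comb n x' y' (fst (P j)) (snd (P j))" by (metis bchoice)
  have "\<forall>j\<in>{1..n}. \<exists>p. y j = comb n x' y' (fst p) (snd p)" using sp unfolding inspan_def by auto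
  then obtain Q where Q: "\<forall>j\<in>{1..n}. y j = comb n x' y' (fst (Q j)) (snd (Q j))" by (metis bchoice)
  have span: "\<exists>a b. v = comb n x' y' a b" if vH: "v \<in> H1 n" for v
  proof -
    obtain a b where "v = comb n x y a b" using sb vH unfolding symplectic_basis_def by blast
    also note comb_comp[of n x x' y' "\<lambda>j. fst (P j)" "\<lambda>j. snd (P j)" y "\<lambda>j. fst (Q j)" "\<lambda>j. snd (Q j)"]
    finally show ?thesis using P Q by blast
  qed
  show ?thesis unfolding symplectic_basis_def
    using h span indep_from_rels[OF r] r unfolding rels_def by blast
qed

lemma sb_rels: "symplectic_basis n x y \<Longrightarrow> rels n x y"
  unfolding symplectic_basis_def rels_def by blast

lemma sb_H1: "symplectic_basis n x y \<Longrightarrow> j \<in> {1..n} \<Longrightarrow> x j \<in> H1 n \<and> y j \<in> H1 n"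
  unfolding symplectic_basis_def by blast

lemma rels_xy: "rels n x y \<Longrightarrow> i \<in> {1..n} \<Longrightarrow> j \<in> {1..n} \<Longrightarrow> inter n (x i) (y j) = (if i = j then 1 else 0)"
  and rels_yx: "rels n x y \<Longrightarrow> i \<in> {1..n} \<Longrightarrow> j \<in> {1..n} \<Longrightarrow> inter n (y j) (x i) = (if i = j then -1 else 0)"
  and rels_xx: "rels n x y \<Longrightarrow> i \<in> {1..n} \<Longrightarrow> j \<in> {1..n} \<Longrightarrow> inter n (x i) (x j) = 0"
  and rels_yy: "rels n x y \<Longrightarrow> i \<in> {1..n} \<Longrightarrow> j \<in> {1..n} \<Longrightarrow> inter n (y i) (y j) = 0"
  unfolding rels_def by (auto simp: inter_antisym[of n "y j" "x i"])

lemma addv_cancel: "addv (addv v k w) (-k) w = v"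
  by (simp add: addv_def)

lemma sb_shxy:
  assumes sb: "symplectic_basis n x y" and j0: "j0 \<in> {1..n}"
  shows "symplectic_basis n (x(j0 := addv (x j0) k (y j0))) y"
proof (rule basis_change[OF sb])
  have r: "rels n x y" by (rule sb_rels[OF sb])
  show "\<forall>j\<in>{1..n}. (x(j0 := addv (x j0) k (y j0))) j \<in> H1 n \<and> y j \<in> H1 n"
    using sb_H1[OF sb] j0 H1_addv by auto
  show "\<forall>j\<in>{1..n}. inspan n (x(j0 := addv (x j0) k (y j0))) y (x j) \<and> inspan n (x(j0 := addv (x j0) k (y j0))) y (y j)"
  proof
    fix j assume j: "j \<in> {1..n}"
    let ?x = "x(j0 := addv (x j0) k (y j0))"
    have "inspan n ?x y (x j)"
    proof (cases "j = j0")
      case True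
      have "x j = addv (?x j0) (-k) (y j0)" using True by (simp add: addv_cancel)
      then show ?thesis using inspan_addv inspan_basis j0 by metis
    next
      case False
      then show ?thesis using inspan_basis[OF j, of ?x y] by simp
    qed
    then show "inspan n ?x y (x j) \<and> inspan n ?x y (y j)" using inspan_basis[OF j] by blast
  qed
  show "rels n (x(j0 := addv (x j0) k (y j0))) y"
    unfolding rels_def using r j0
    by (auto simp: inter_addv1 inter_addv2 rels_xy rels_yx rels_xx rels_yy)
qed

lemma sb_shyx:
  assumes sb: "symplectic_basis n x y" and j0: "j0 \<in> {1..n}"
  shows "symplectic_basis n x (y(j0 := addv (y j0) k (x j0)))"
proof (rule basis_change[OF sb])
  have r: "rels n x y" by (rule sb_rels[OF sb])
  let ?y = "y(j0 := addv (y j0) k (x j0))"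
  show "\<forall>j\<in>{1..n}. x j \<in> H1 n \<and> ?y j \<in> H1 n"
    using sb_H1[OF sb] j0 H1_addv by auto
  show "\<forall>j\<in>{1..n}. inspan n x ?y (x j) \<and> inspan n x ?y (y j)"
  proof
    fix j assume j: "j \<in> {1..n}"
    have "inspan n x ?y (y j)"
    proof (cases "j = j0")
      case True
      have "y j = addv (?y j0) (-k) (x j0)" using True by (simp add: addv_cancel)
      then show ?thesis using inspan_addv inspan_basis j0 by metis
    next
      case False
      then show ?thesis using inspan_basis[OF j, of x ?y] by simp
    qed
    then show "inspan n x ?y (x j) \<and> inspan n x ?y (y j)" using inspan_basis[OF j] by blast
  qed
  show "rels n x ?y"
    unfolding rels_def using r j0
    by (auto simp: inter_addv1 inter_addv2 rels_xy rels_yx rels_xx rels_yy)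
qed

lemma sb_cross:
  assumes sb: "symplectic_basis n x y" and i0: "i0 \<in> {1..n}" and l0: "l0 \<in> {1..n}" and ne: "i0 \<noteq> l0"
  shows "symplectic_basis n (x(i0 := addv (x i0) k (x l0))) (y(l0 := addv (y l0) (-k) (y i0)))"
proof (rule basis_change[OF sb])
  have r: "rels n x y" by (rule sb_rels[OF sb])
  let ?x = "x(i0 := addv (x i0) k (x l0))"
  let ?y = "y(l0 := addv (y l0) (-k) (y i0))"
  show "\<forall>j\<in>{1..n}. ?x j \<in> H1 n \<and> ?y j \<in> H1 n"
    using sb_H1[OF sb] i0 l0 H1_addv by auto
  show "\<forall>j\<in>{1..n}. inspan n ?x ?y (x j) \<and> inspan n ?x ?y (y j)"
  proof
    fix j assume j: "j \<in> {1..n}"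
    have "inspan n ?x ?y (x j)"
    proof (cases "j = i0")
      case True
      have "x j = addv (?x i0) (-k) (?x l0)" using True ne by (simp add: addv_cancel)
      then show ?thesis using inspan_addv inspan_basis i0 l0 by metis
    next
      case False
      then show ?thesis using inspan_basis[OF j, of ?x ?y] by simp
    qed
    moreover have "inspan n ?x ?y (y j)"
    proof (cases "j = l0")
      case True
      have "y j = addv (?y l0) (- (-k)) (?y i0)" using True ne by (simp add: addv_def)
      then show ?thesis using inspan_addv inspan_basis i0 l0 by metis
    next
      case False
      then show ?thesis using inspan_basis[OF j, of ?x ?y] by simp
    qed
    ultimately show "inspan n ?x ?y (x j) \<and> inspan n ?x ?y (y j)" by blast
  qed
  show "rels n ?x ?y"
    unfolding rels_def using r i0 l0 ne
    by (auto simp: inter_addv1 inter_addv2 rels_xy rels_yx rels_xx rels_yy)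
qed



lemma chi_addv: "chi c n (addv v k w) = chi c n v + of_int k * chi c n w"
  by (simp add: chi_def addv_def sum.distrib sum_distrib_left algebra_simps)

lemma Im_shear1: "Im (cnj (a + of_int k * b) * b) = Im (cnj a * b)"
  by (simp add: algebra_simps)

lemma Im_shear2: "Im (cnj a * (b + of_int k * a)) = Im (cnj a * b)"
  by (simp add: algebra_simps)

definition osum where
  "osum n c x y = (\<Sum>j\<in>{1..n}. Im (cnj (chi c n (x j)) * chi c n (y j)))"

definition G where
  "G n c x y \<longleftrightarrow> symplectic_basis n x y \<and> osum n c x y = omega c n"

lemma G_shxy:
  assumes "G n c x y" "j0 \<in> {1..n}"
  shows "G n c (x(j0 := addv (x j0) k (y j0))) y"
proof -
  have "osum n c (x(j0 := addv (x j0) k (y j0))) y = osum n c x y"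
    unfolding osum_def by (rule sum.cong) (auto simp: chi_addv algebra_simps)
  then show ?thesis using assms sb_shxy unfolding G_def by metis
qed

lemma G_shyx:
  assumes "G n c x y" "j0 \<in> {1..n}"
  shows "G n c x (y(j0 := addv (y j0) k (x j0)))"
proof -
  have "osum n c x (y(j0 := addv (y j0) k (x j0))) = osum n c x y"
    unfolding osum_def by (rule sum.cong) (auto simp: chi_addv algebra_simps)
  then show ?thesis using assms sb_shyx unfolding G_def by metis
qed

lemma sum_two_points:
  assumes "finite S" "i \<in> S" "l \<in> S" "i \<noteq> l"
    and "\<And>j. j \<in> S \<Longrightarrow> j \<noteq> i \<Longrightarrow> j \<noteq> l \<Longrightarrow> g j = f j"
    and "g i = f i + d" "g l = f l - d"
  shows "sum g S = (sum f S :: real)"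
proof -
  have "sum g S = sum (\<lambda>j. f j + ((if j = i then d else 0) + (if j = l then -d else 0))) S"
    using assms by (intro sum.cong) auto
  also have "\<dots> = sum f S + (d - d)"
    using assms by (simp add: sum.distrib)
  finally show ?thesis by simp
qed

lemma G_cross:
  assumes "G n c x y" "i0 \<in> {1..n}" "l0 \<in> {1..n}" "i0 \<noteq> l0"
  shows "G n c (x(i0 := addv (x i0) k (x l0))) (y(l0 := addv (y l0) (-k) (y i0)))"
proof -
  have "osum n c (x(i0 := addv (x i0) k (x l0))) (y(l0 := addv (y l0) (-k) (y i0))) = osum n c x y"
    unfolding osum_def
    by (rule sum_two_points[where i = i0 and l = l0 and d = "of_int k * Im (cnj (chi c n (x l0)) * chi c n (y i0))"])
       (use assms in \<open>auto simp: chi_addv algebra_simps\<close>)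
  then show ?thesis using assms sb_cross unfolding G_def by metis
qed



lemma euclid0:
  fixes U W :: "'s \<Rightarrow> int"
  assumes op1: "\<And>s k. P s \<Longrightarrow> \<exists>s'. P s' \<and> U s' = U s + k * W s \<and> W s' = W s"
    and op2: "\<And>s k. P s \<Longrightarrow> \<exists>s'. P s' \<and> W s' = W s + k * U s \<and> U s' = U s"
  shows "P s \<Longrightarrow> \<exists>s'. P s' \<and> W s' = 0"
proof (induction "nat \<bar>W s\<bar>" arbitrary: s rule: less_induct)
  case less
  show ?case
  proof (cases "W s = 0")
    case True
    then show ?thesis using less.prems by blast
  next
    case False
    define a where "a = \<bar>W s\<bar>"
    have a: "a > 0" using False a_def by simp
    define r where "r = (U s - 1) mod a + 1"
    have r1: "1 \<le> r" "r \<le> a" using pos_mod_bound[OF a, of "U s - 1"] pos_mod_sign[OF a, of "U s - 1"] unfolding r_def by linarith+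
    have "r - U s = - a * ((U s - 1) div a)"
      unfolding r_def by (simp add: algebra_simps minus_div_mult_eq_mod[symmetric])
    then have "a dvd (r - U s)" by (metis dvd_triv_left dvd_minus_iff mult_minus_left)
    then have "W s dvd (r - U s)" unfolding a_def by simp
    then obtain k1 where k1: "r - U s = W s * k1" by blast
    obtain s1 where s1: "P s1" "U s1 = U s + k1 * W s" "W s1 = W s" using op1[OF less.prems] by blast
    have U1: "U s1 = r" using s1(2) k1 by (simp add: algebra_simps)
    obtain s2 where s2: "P s2" "W s2 = W s1 + (- (W s1 div r)) * U s1" using op2[OF s1(1)] by blast
    have W2: "W s2 = W s mod r" using s2(2) U1 s1(3) by (simp add: algebra_simps minus_div_mult_eq_mod[symmetric])
    have "0 \<le> W s mod r" "W s mod r < r" using r1 by simp_all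
    then have "nat \<bar>W s2\<bar> < nat \<bar>W s\<bar>" using W2 r1 a_def False by linarith
    then show ?thesis using less.hyps s2(1) by blast
  qed
qed

lemma euclid:
  fixes U W :: "'s \<Rightarrow> int"
  assumes op1: "\<And>s k. P s \<Longrightarrow> \<exists>s'. P s' \<and> U s' = U s + k * W s \<and> W s' = W s"
    and op2: "\<And>s k. P s \<Longrightarrow> \<exists>s'. P s' \<and> W s' = W s + k * U s \<and> U s' = U s"
    and "P s"
  shows "\<exists>s'. P s' \<and> W s' = 0 \<and> U s' \<ge> 0"
proof -
  obtain s1 where s1: "P s1" "W s1 = 0" using euclid0[of P U W, OF op1 op2 \<open>P s\<close>] by blast
  show ?thesis
  proof (cases "U s1 \<ge> 0")
    case True then show ?thesis using s1 by blast
  next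
    case False
    obtain s2 where s2: "P s2" "W s2 = U s1" "U s2 = U s1" using op2[OF s1(1), of 1] s1(2) by auto
    obtain s3 where s3: "P s3" "U s3 = - U s1" "W s3 = U s1" using op1[OF s2(1), of "-2"] s2 by auto
    obtain s4 where s4: "P s4" "W s4 = 0" "U s4 = - U s1" using op2[OF s3(1), of 1] s3 by auto
    then show ?thesis using False by auto
  qed
qed



lemma inhandle:
  assumes g: "G n c x y" and j0: "j0 \<in> {1..n}" and L: "lin L" and M: "lin M"
  shows "\<exists>x' y'. G n c x' y' \<and> L (y' j0) = 0 \<and> L (x' j0) \<ge> 0 \<and>
     (\<forall>m. m \<noteq> j0 \<longrightarrow> x' m = x m \<and> y' m = y m) \<and>
     (M (x j0) = 0 \<and> M (y j0) = 0 \<longrightarrow> M (x' j0) = 0 \<and> M (y' j0) = 0)"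
proof -
  define P where "P s \<longleftrightarrow> G n c (fst s) (snd s) \<and> (\<forall>m. m \<noteq> j0 \<longrightarrow> fst s m = x m \<and> snd s m = y m) \<and>
     (M (x j0) = 0 \<and> M (y j0) = 0 \<longrightarrow> M (fst s j0) = 0 \<and> M (snd s j0) = 0)" for s
  have "\<exists>s'. P s' \<and> (\<lambda>s. L (snd s j0)) s' = 0 \<and> (\<lambda>s. L (fst s j0)) s' \<ge> 0"
  proof (rule euclid)
    fix s k assume Ps: "P s"
    let ?s = "((fst s)(j0 := addv (fst s j0) k (snd s j0)), snd s)"
    have "P ?s" using Ps G_shxy[OF _ j0] unfolding P_def by (auto simp: lin_addv[OF M])
    moreover have "L (fst ?s j0) = L (fst s j0) + k * L (snd s j0)" by (simp add: lin_addv[OF L])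
    ultimately show "\<exists>s'. P s' \<and> L (fst s' j0) = L (fst s j0) + k * L (snd s j0) \<and> L (snd s' j0) = L (snd s j0)"
      by (intro exI[of _ ?s]) simp
  next
    fix s k assume Ps: "P s"
    let ?s = "(fst s, (snd s)(j0 := addv (snd s j0) k (fst s j0)))"
    have "P ?s" using Ps G_shyx[OF _ j0] unfolding P_def by (auto simp: lin_addv[OF M])
    moreover have "L (snd ?s j0) = L (snd s j0) + k * L (fst s j0)" by (simp add: lin_addv[OF L])
    ultimately show "\<exists>s'. P s' \<and> L (snd s' j0) = L (snd s j0) + k * L (fst s j0) \<and> L (fst s' j0) = L (fst s j0)"
      by (intro exI[of _ ?s]) simp
  next
    show "P (x, y)" using g unfolding P_def by simp
  qed
  then show ?thesis unfolding P_def by auto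
qed

lemma crosshandle:
  assumes g: "G n c x y" and i0: "i0 \<in> {1..n}" and j0: "j0 \<in> {1..n}" and ne: "i0 \<noteq> j0"
    and L: "lin L" and yi: "L (y i0) = 0" and yj: "L (y j0) = 0"
  shows "\<exists>x' y'. G n c x' y' \<and> L (x' j0) = 0 \<and> L (y' i0) = 0 \<and> L (y' j0) = 0 \<and>
     (\<forall>m. m \<noteq> i0 \<and> m \<noteq> j0 \<longrightarrow> x' m = x m \<and> y' m = y m)"
proof -
  define P where "P s \<longleftrightarrow> G n c (fst s) (snd s) \<and> L (snd s i0) = 0 \<and> L (snd s j0) = 0 \<and>
      (\<forall>m. m \<noteq> i0 \<and> m \<noteq> j0 \<longrightarrow> fst s m = x m \<and> snd s m = y m)" for s
  have "\<exists>s'. P s' \<and> (\<lambda>s. L (fst s j0)) s' = 0 \<and> (\<lambda>s. L (fst s i0)) s' \<ge> 0"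
  proof (rule euclid)
    fix s k assume Ps: "P s"
    let ?s = "((fst s)(i0 := addv (fst s i0) k (fst s j0)), (snd s)(j0 := addv (snd s j0) (-k) (snd s i0)))"
    have "P ?s" using Ps G_cross[OF _ i0 j0 ne] ne unfolding P_def by (auto simp: lin_addv[OF L])
    moreover have "L (fst ?s i0) = L (fst s i0) + k * L (fst s j0)" by (simp add: lin_addv[OF L])
    ultimately show "\<exists>s'. P s' \<and> L (fst s' i0) = L (fst s i0) + k * L (fst s j0) \<and> L (fst s' j0) = L (fst s j0)"
      using ne by (intro exI[of _ ?s]) simp
  next
    fix s k assume Ps: "P s"
    let ?s = "((fst s)(j0 := addv (fst s j0) k (fst s i0)), (snd s)(i0 := addv (snd s i0) (-k) (snd s j0)))"
    have "P ?s" using Ps G_cross[OF _ j0 i0] ne unfolding P_def by (auto simp: lin_addv[OF L])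
    moreover have "L (fst ?s j0) = L (fst s j0) + k * L (fst s i0)" by (simp add: lin_addv[OF L])
    ultimately show "\<exists>s'. P s' \<and> L (fst s' j0) = L (fst s j0) + k * L (fst s i0) \<and> L (fst s' i0) = L (fst s i0)"
      using ne by (intro exI[of _ ?s]) simp
  next
    show "P (x, y)" using g yi yj unfolding P_def by simp
  qed
  then show ?thesis unfolding P_def by auto
qed



lemma sum_shift1: "(\<Sum>j\<in>{1..m}. g j) = (\<Sum>i<m. g (Suc i))"
  by (induct m) auto

lemma lin_sum: "lin (\<lambda>v. \<Sum>k<N. v k * (p k :: int))"
  unfolding lin_def by (simp add: sum.distrib sum_distrib_left algebra_simps)

theorem mainTheorem13:
  fixes n :: nat and c :: "nat \<Rightarrow> complex"
  assumes "n \<ge> 2"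
    and "chi c n ` H1 n = gauss_ints"
    and "omega c n > 0"
  shows "\<exists>x y. symplectic_basis n x y \<and>
           Im (cnj (chi c n (x 1)) * chi c n (y 1)) > 0 \<and>
           (\<forall>j\<in>{2..n}. chi c n (y j) = 0 \<and>
              chi c n (x j) \<in> \<real> \<and> Re (chi c n (x j)) \<ge> 0)"
proof -
  have ck: "\<exists>a b. c k = of_int a + \<i> * of_int b" if k: "k < 2*n" for k
  proof -
    have e: "(\<lambda>t. of_bool (t = k) :: int) \<in> H1 n" using k by (simp add: H1_def)
    have kk: "{..<2*n} \<inter> {t. t = k} = {k}" using k by auto
    have "chi c n (\<lambda>t. of_bool (t = k)) = c k" using k by (simp add: chi_def kk)
    moreover have "chi c n (\<lambda>t. of_bool (t = k)) \<in> chi c n ` H1 n" using e by (rule imageI)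
    ultimately have "c k \<in> gauss_ints" using assms(2) by simp
    then show ?thesis unfolding gauss_ints_def by blast
  qed
  then have "\<forall>k. \<exists>pq. k < 2*n \<longrightarrow> c k = of_int (fst pq) + \<i> * of_int (snd pq)" by auto
  then obtain PQ where PQ0: "\<forall>k. k < 2*n \<longrightarrow> c k = of_int (fst (PQ k)) + \<i> * of_int (snd (PQ k))"
    by (rule choice[THEN exE])
  then have PQ: "\<And>k. k < 2*n \<Longrightarrow> c k = of_int (fst (PQ k)) + \<i> * of_int (snd (PQ k))" by blast
  define p where "p k = fst (PQ k)" for k
  define q where "q k = snd (PQ k)" for k
  define alpha where "alpha v = (\<Sum>k<2*n. v k * p k)" for v
  define beta where "beta v = (\<Sum>k<2*n. v k * q k)" for v
  have la: "lin alpha" unfolding alpha_def by (rule lin_sum)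
  have lb: "lin beta" unfolding beta_def by (rule lin_sum)
  have chiab: "chi c n v = of_int (alpha v) + \<i> * of_int (beta v)" for v
  proof -
    have "chi c n v = (\<Sum>k<2*n. of_int (v k * p k) + \<i> * of_int (v k * q k))"
      unfolding chi_def using PQ by (intro sum.cong) (auto simp: p_def q_def algebra_simps)
    then show ?thesis by (simp add: alpha_def beta_def sum.distrib sum_distrib_left)
  qed
  define x0 :: "nat \<Rightarrow> nat \<Rightarrow> int" where "x0 j = (\<lambda>t. of_bool (t = j - 1) :: int)" for j
  define y0 :: "nat \<Rightarrow> nat \<Rightarrow> int" where "y0 j = (\<lambda>t. of_bool (t = n + j - 1) :: int)" for j
  have n1: "1 \<in> {1..n}" using assms(1) by simp
  have r0: "rels n x0 y0"
    unfolding rels_def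
  proof (intro ballI)
    fix i j assume i: "i \<in> {1..n}" and j: "j \<in> {1..n}"
    have "inter n (x0 i) (y0 j) = (\<Sum>t<n. of_bool (t = i - 1) * of_bool (t = j - 1))"
      unfolding inter_def x0_def y0_def using i j by (intro sum.cong) auto
    also have "\<dots> = (if i = j then 1 else 0)"
    proof -
      have hh: "{..<n} \<inter> {t. t = i - 1} = {i - 1}" using i by auto
      have e1: "(\<Sum>t<n. of_bool (t = i - 1) * of_bool (t = j - 1) :: int) = of_bool (i - 1 = j - 1)"
        using i j by (simp add: hh Int_insert_right) linarith
      have e2: "(i - 1 = j - 1) = (i = j)" using i j by auto
      show ?thesis unfolding e1 e2 by simp
    qed
    finally have 1: "inter n (x0 i) (y0 j) = (if i = j then 1 else 0)" .
    have 2: "inter n (x0 i) (x0 j) = 0"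
      unfolding inter_def x0_def using i j by (intro sum.neutral) auto
    have 3: "inter n (y0 i) (y0 j) = 0"
      unfolding inter_def y0_def using i j by (intro sum.neutral) auto
    show "inter n (x0 i) (y0 j) = (if i = j then 1 else 0) \<and> inter n (x0 i) (x0 j) = 0 \<and> inter n (y0 i) (y0 j) = 0"
      using 1 2 3 by blast
  qed
  have span0: "v = comb n x0 y0 (\<lambda>j. v (j - 1)) (\<lambda>j. v (n + j - 1))" if vH: "v \<in> H1 n" for v
  proof
    fix t
    have A1: "{1..n} \<inter> {j. t = j - 1} = (if t < n then {t+1} else {})" by auto
    have A2: "{1..n} \<inter> {j. t = n + j - 1} = (if n \<le> t \<and> t < 2*n then {t+1-n} else {})" by auto
    have "comb n x0 y0 (\<lambda>j. v (j - 1)) (\<lambda>j. v (n + j - 1)) t =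
        (\<Sum>j\<in>{1..n}. v (j - 1) * of_bool (t = j - 1)) + (\<Sum>j\<in>{1..n}. v (n + j - 1) * of_bool (t = n + j - 1))"
      unfolding comb_def x0_def y0_def by (simp add: sum.distrib)
    also have "\<dots> = v t"
      using vH unfolding H1_def by (simp only: sum_mult_of_bool_eq[OF finite_atLeastAtMost] A1 A2) auto
    finally show "v t = comb n x0 y0 (\<lambda>j. v (j - 1)) (\<lambda>j. v (n + j - 1)) t" by simp
  qed
  have sb0: "symplectic_basis n x0 y0"
    unfolding symplectic_basis_def
  proof (intro conjI)
    show "\<forall>j\<in>{1..n}. x0 j \<in> H1 n \<and> y0 j \<in> H1 n"
      unfolding H1_def x0_def y0_def by auto
    show "\<forall>v\<in>H1 n. \<exists>a b. v = comb n x0 y0 a b" using span0 by blast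
    show "\<forall>a b. comb n x0 y0 a b = (\<lambda>_. 0) \<longrightarrow> (\<forall>j\<in>{1..n}. a j = 0 \<and> b j = 0)"
      using indep_from_rels[OF r0] by blast
  qed (use r0 in \<open>auto simp: rels_def\<close>)
  have chix0: "chi c n (x0 j) = c (j - 1)" and chiy0: "chi c n (y0 j) = c (n + j - 1)" if j: "j \<in> {1..n}" for j
  proof -
    have h1: "{..<2*n} \<inter> {j - Suc 0} = {j - Suc 0}" using j by auto
    have h2: "{..<2*n} \<inter> {n + j - Suc 0} = {n + j - Suc 0}" using j by auto
    show "chi c n (x0 j) = c (j - 1)" unfolding chi_def x0_def by (simp add: h1)
    show "chi c n (y0 j) = c (n + j - 1)" unfolding chi_def y0_def by (simp add: h2)
  qed
  have "osum n c x0 y0 = (\<Sum>j\<in>{1..n}. Im (cnj (c (j - 1)) * c (n + j - 1)))"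
    unfolding osum_def by (rule sum.cong) (auto simp: chix0 chiy0)
  also have "\<dots> = omega c n" unfolding sum_shift1 omega_def by simp
  finally have G0: "G n c x0 y0" unfolding G_def using sb0 by simp
  have ph1: "\<exists>x y. G n c x y \<and> beta (y 1) = 0 \<and> (\<forall>j\<in>{2..m}. beta (x j) = 0 \<and> beta (y j) = 0)"
    if "m \<le> n" for m
    using that
  proof (induction m)
    case 0
    obtain x y where "G n c x y" "beta (y 1) = 0"
      using inhandle[OF G0 n1 lb lb] by blast
    then show ?case by auto
  next
    case (Suc m)
    obtain x y where xy: "G n c x y" "beta (y 1) = 0" "\<forall>j\<in>{2..m}. beta (x j) = 0 \<and> beta (y j) = 0"
      using Suc by auto
    show ?case
    proof (cases "m = 0")
      case True
      then show ?thesis using xy by auto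
    next
      case False
      have j0: "Suc m \<in> {1..n}" using Suc.prems by simp
      have ne: "(1::nat) \<noteq> Suc m" using False by simp
      obtain x1 y1 where x1: "G n c x1 y1" "beta (y1 (Suc m)) = 0"
          "\<forall>i. i \<noteq> Suc m \<longrightarrow> x1 i = x i \<and> y1 i = y i"
        using inhandle[OF xy(1) j0 lb lb] by blast
      have "beta (y1 1) = 0" using x1(3) xy(2) ne by metis
      then obtain x2 y2 where x2: "G n c x2 y2" "beta (x2 (Suc m)) = 0" "beta (y2 1) = 0"
          "beta (y2 (Suc m)) = 0" "\<forall>i. i \<noteq> 1 \<and> i \<noteq> Suc m \<longrightarrow> x2 i = x1 i \<and> y2 i = y1 i"
        using crosshandle[OF x1(1) n1 j0 ne lb _ x1(2)] by blast
      have "\<forall>j\<in>{2..Suc m}. beta (x2 j) = 0 \<and> beta (y2 j) = 0"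
      proof
        fix j assume j: "j \<in> {2..Suc m}"
        show "beta (x2 j) = 0 \<and> beta (y2 j) = 0"
        proof (cases "j = Suc m")
          case True then show ?thesis using x2 by simp
        next
          case False
          then have "j \<in> {2..m}" "j \<noteq> 1" using j by auto
          then show ?thesis using x2(5) x1(3) xy(3) False by metis
        qed
      qed
      then show ?thesis using x2 by blast
    qed
  qed
  have ph2: "\<exists>x y. G n c x y \<and> (\<forall>j\<in>{2..n}. beta (x j) = 0 \<and> beta (y j) = 0) \<and>
      (\<forall>j\<in>{2..m}. alpha (y j) = 0 \<and> alpha (x j) \<ge> 0)"
    if "m \<le> n" for m
    using that
  proof (induction m)
    case 0
    then show ?case using ph1[of n] by auto
  next
    case (Suc m)
    obtain x y where xy: "G n c x y" "\<forall>j\<in>{2..n}. beta (x j) = 0 \<and> beta (y j) = 0"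
        "\<forall>j\<in>{2..m}. alpha (y j) = 0 \<and> alpha (x j) \<ge> 0"
      using Suc by auto
    show ?case
    proof (cases "m = 0")
      case True
      then show ?thesis using xy by auto
    next
      case False
      have j0: "Suc m \<in> {1..n}" using Suc.prems by simp
      have j2: "Suc m \<in> {2..n}" using Suc.prems False by simp
      obtain x1 y1 where x1: "G n c x1 y1" "alpha (y1 (Suc m)) = 0" "alpha (x1 (Suc m)) \<ge> 0"
          "\<forall>i. i \<noteq> Suc m \<longrightarrow> x1 i = x i \<and> y1 i = y i"
          "beta (x (Suc m)) = 0 \<and> beta (y (Suc m)) = 0 \<longrightarrow> beta (x1 (Suc m)) = 0 \<and> beta (y1 (Suc m)) = 0"
        using inhandle[OF xy(1) j0 la lb] by blast
      have b: "beta (x1 (Suc m)) = 0 \<and> beta (y1 (Suc m)) = 0" using x1(5) xy(2) j2 by blast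
      have "\<forall>j\<in>{2..n}. beta (x1 j) = 0 \<and> beta (y1 j) = 0"
        using b x1(4) xy(2) by metis
      moreover have "\<forall>j\<in>{2..Suc m}. alpha (y1 j) = 0 \<and> alpha (x1 j) \<ge> 0"
      proof
        fix j assume j: "j \<in> {2..Suc m}"
        show "alpha (y1 j) = 0 \<and> alpha (x1 j) \<ge> 0"
        proof (cases "j = Suc m")
          case True then show ?thesis using x1 by simp
        next
          case False
          then have "j \<in> {2..m}" using j by auto
          then show ?thesis using x1(4) xy(3) False by metis
        qed
      qed
      ultimately show ?thesis using x1(1) by blast
    qed
  qed
  obtain x y where xy: "G n c x y" "\<forall>j\<in>{2..n}. beta (x j) = 0 \<and> beta (y j) = 0"
      "\<forall>j\<in>{2..n}. alpha (y j) = 0 \<and> alpha (x j) \<ge> 0"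
    using ph2[of n] by auto
  have yz: "chi c n (y j) = 0" if "j \<in> {2..n}" for j
    using xy that by (simp add: chiab)
  have xr: "chi c n (x j) \<in> \<real> \<and> Re (chi c n (x j)) \<ge> 0" if "j \<in> {2..n}" for j
    using xy that by (simp add: chiab)
  have "osum n c x y = Im (cnj (chi c n (x 1)) * chi c n (y 1)) + (\<Sum>j\<in>{2..n}. Im (cnj (chi c n (x j)) * chi c n (y j)))"
  proof -
    have e: "{1..n} = insert 1 {2..n}" using assms(1) by auto
    show ?thesis unfolding osum_def e by (rule sum.insert) auto
  qed
  also have "(\<Sum>j\<in>{2..n}. Im (cnj (chi c n (x j)) * chi c n (y j))) = 0"
    using yz by simp
  finally have "Im (cnj (chi c n (x 1)) * chi c n (y 1)) = omega c n" using xy(1) unfolding G_def by simp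
  then have "Im (cnj (chi c n (x 1)) * chi c n (y 1)) > 0" using assms(3) by simp
  moreover have "symplectic_basis n x y" using xy(1) unfolding G_def by simp
  ultimately show ?thesis using yz xr by blast
qed


end
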